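(* Let $k=2m+1$, $l=2n+1$ be odd integers. Let $V(k,l)\subset\mathbb C^3(x,y,z)$ be the vanishing set of $S_n(t)S_{m-1}(z)-S_{n-1}(t)S_m(z)$ with $t=\left( xS_m(z)-yS_{m-1}(z) \right)\left( yS_m(z)-xS_{m-1}(z) \right)-z\left(S^2_m(z)+S^2_{m-1}(z)\right)+4S_m(z)S_{m-1}(z)$, and let $U(k,l)\subset\mathbb C^3(u,v,z)$ be the vanishing set of $S_n(t)S_{m-1}(z)-S_{n-1}(t)S_m(z)$ with $t=uv-z\big(S_m^2(z)+S_{m-1}^2(z)\big)+4S_m(z)S_{m-1}(z)$. Then $V(k,l)$ is birational to $U(k,l)$.
   Context: The Chebyshev polynomials $S_j(\omega)$ are defined for all integers $j$ by $S_0=1$, $S_1=\omega$, $S_{j+1}=\omega S_j-S_{j-1}$. (The correspondence is given by the substitution $u=xS_m(z)-yS_{m-1}(z)$, $v=yS_m(z)-xS_{m-1}(z)$.) *)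

theory Defs
  imports Complex_Main
begin

(* Auxiliary: T n w = S_{n-1}(w), with T 0 = 0, T 1 = 1. *)
fun chebT :: "nat \<Rightarrow> complex \<Rightarrow> complex" where
  "chebT 0 w = 0"
| "chebT (Suc 0) w = 1"
| "chebT (Suc (Suc n)) w = w * chebT (Suc n) w - chebT n w"

(* Chebyshev polynomials S_j for all integers j:
   S_0 = 1, S_1 = w, S_{j+1} = w S_j - S_{j-1}. *)
definition chebS :: "int \<Rightarrow> complex \<Rightarrow> complex" where
  "chebS j w = (if j \<ge> -1 then chebT (nat (j + 1)) w else - chebT (nat (- j - 1)) w)"

type_synonym pt3 = "complex \<times> complex \<times> complex"

inductive poly3 :: "(pt3 \<Rightarrow> complex) \<Rightarrow> bool" where
  const: "poly3 (\<lambda>_. c)"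
| coord1: "poly3 (\<lambda>(a,b,c). a)"
| coord2: "poly3 (\<lambda>(a,b,c). b)"
| coord3: "poly3 (\<lambda>(a,b,c). c)"
| add: "poly3 f \<Longrightarrow> poly3 g \<Longrightarrow> poly3 (\<lambda>p. f p + g p)"
| mult: "poly3 f \<Longrightarrow> poly3 g \<Longrightarrow> poly3 (\<lambda>p. f p * g p)"

definition zariski_open_in :: "pt3 set \<Rightarrow> pt3 set \<Rightarrow> bool" where
  "zariski_open_in X A \<longleftrightarrow>
     (\<exists>P. (\<forall>f\<in>P. poly3 f) \<and> A = {p\<in>X. \<exists>f\<in>P. f p \<noteq> 0})"

definition zariski_dense_in :: "pt3 set \<Rightarrow> pt3 set \<Rightarrow> bool" where
  "zariski_dense_in X A \<longleftrightarrow> A \<subseteq> X \<and>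
     (\<forall>f. poly3 f \<longrightarrow> (\<forall>p\<in>A. f p = 0) \<longrightarrow> (\<forall>p\<in>X. f p = 0))"

definition rational_map_on :: "pt3 set \<Rightarrow> (pt3 \<Rightarrow> pt3) \<Rightarrow> bool" where
  "rational_map_on A F \<longleftrightarrow>
     (\<exists>p1 q1 p2 q2 p3 q3. poly3 p1 \<and> poly3 q1 \<and> poly3 p2 \<and> poly3 q2 \<and>
        poly3 p3 \<and> poly3 q3 \<and>
        (\<forall>x\<in>A. q1 x \<noteq> 0 \<and> q2 x \<noteq> 0 \<and> q3 x \<noteq> 0 \<and>
            F x = (p1 x / q1 x, p2 x / q2 x, p3 x / q3 x)))"

definition birational :: "pt3 set \<Rightarrow> pt3 set \<Rightarrow> bool" where
  "birational X Y \<longleftrightarrow>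
     (\<exists>X0 Y0 F G. zariski_open_in X X0 \<and> zariski_dense_in X X0 \<and>
        zariski_open_in Y Y0 \<and> zariski_dense_in Y Y0 \<and>
        rational_map_on X0 F \<and> rational_map_on Y0 G \<and>
        F ` X0 \<subseteq> Y0 \<and> G ` Y0 \<subseteq> X0 \<and>
        (\<forall>x\<in>X0. G (F x) = x) \<and> (\<forall>y\<in>Y0. F (G y) = y))"

definition tV :: "int \<Rightarrow> pt3 \<Rightarrow> complex" where
  "tV m = (\<lambda>(x,y,z). (x * chebS m z - y * chebS (m-1) z) * (y * chebS m z - x * chebS (m-1) z)
      - z * ((chebS m z)^2 + (chebS (m-1) z)^2) + 4 * chebS m z * chebS (m-1) z)"

definition tU :: "int \<Rightarrow> pt3 \<Rightarrow> complex" where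
  "tU m = (\<lambda>(u,v,z). u * v - z * ((chebS m z)^2 + (chebS (m-1) z)^2) + 4 * chebS m z * chebS (m-1) z)"

definition Vkl :: "int \<Rightarrow> int \<Rightarrow> pt3 set" where
  "Vkl m n = {(x,y,z). chebS n (tV m (x,y,z)) * chebS (m-1) z - chebS (n-1) (tV m (x,y,z)) * chebS m z = 0}"

definition Ukl :: "int \<Rightarrow> int \<Rightarrow> pt3 set" where
  "Ukl m n = {(u,v,z). chebS n (tU m (u,v,z)) * chebS (m-1) z - chebS (n-1) (tU m (u,v,z)) * chebS m z = 0}"

end

theory Submission
  imports Defs "HOL-Complex_Analysis.Complex_Analysis"
begin

lemma root_cont:
  fixes \<Phi> :: "complex \<times> complex \<Rightarrow> complex"
  assumes cont: "continuous_on UNIV \<Phi>"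
  and hol: "\<And>\<mu>. (\<lambda>l. \<Phi>(\<mu>,l)) holomorphic_on UNIV"
  and z0: "\<Phi>(0,0) = 0" and nz: "\<Phi>(0,l1) \<noteq> 0"
  and ep: "\<epsilon> > 0"
  shows "\<exists>\<delta>>0. \<forall>\<mu>. norm \<mu> < \<delta> \<longrightarrow> (\<exists>l. norm l < \<epsilon> \<and> \<Phi>(\<mu>,l) = 0)"
proof -
  obtain r where r0: "0 < r" and rz: "\<And>l. l \<in> ball 0 r - {0} \<Longrightarrow> \<Phi>(0,l) \<noteq> 0"
    using isolated_zeros[OF hol[of 0], of 0 l1] z0 nz by auto
  define r' where "r' = min (r/2) (\<epsilon>/2)"
  have r'0: "r' > 0" and r'r: "r' < r" and r'e: "r' < \<epsilon>" using r0 ep by (auto simp: r'_def)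
  have cs: "continuous_on (sphere 0 r') (\<lambda>l. norm (\<Phi>(0,l)))"
    by (intro continuous_intros continuous_on_compose2[OF cont]) auto
  have ne: "sphere (0::complex) r' \<noteq> {}" using r'0 by auto
  obtain l0 where l0: "l0 \<in> sphere 0 r'" and l0m: "\<And>l. l \<in> sphere 0 r' \<Longrightarrow> norm (\<Phi>(0,l0)) \<le> norm (\<Phi>(0,l))"
    using continuous_attains_inf[OF compact_sphere ne cs] by blast
  define m where "m = norm (\<Phi>(0,l0))"
  have m0: "m > 0" using rz[of l0] l0 r'r r'0 by (auto simp: m_def)
  have uc: "uniformly_continuous_on (cball 0 1 \<times> cball 0 r') \<Phi>"
    by (intro compact_uniformly_continuous continuous_on_subset[OF cont] compact_Times) auto
  then obtain d where d0: "d > 0" and dd: "\<And>x y. x \<in> cball 0 1 \<times> cball 0 r' \<Longrightarrow> y \<in> cball 0 1 \<times> cball 0 r'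
     \<Longrightarrow> dist y x < d \<Longrightarrow> dist (\<Phi> y) (\<Phi> x) < m/2"
    unfolding uniformly_continuous_on_def using m0 by (metis half_gt_zero)
  show ?thesis
  proof (intro exI[of _ "min d 1"] conjI allI impI)
    show "min d 1 > 0" using d0 by auto
    fix \<mu> :: complex assume \<mu>: "norm \<mu> < min d 1"
    have close: "norm (\<Phi>(\<mu>,l) - \<Phi>(0,l)) < m/2" if "l \<in> cball 0 r'" for l
    proof -
      have "dist (\<Phi>(\<mu>,l)) (\<Phi>(0,l)) < m/2"
        using \<mu> that by (intro dd) (auto simp: dist_Pair_Pair)
      thus ?thesis by (simp add: dist_norm)
    qed
    show "\<exists>l. norm l < \<epsilon> \<and> \<Phi>(\<mu>,l) = 0"
    proof (rule ccontr)
      assume "\<not> ?thesis"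
      hence nzb: "\<And>l. l \<in> cball 0 r' \<Longrightarrow> \<Phi>(\<mu>,l) \<noteq> 0" using r'e by fastforce
      have "norm (inverse (\<Phi>(\<mu>,0))) \<le> 2/m"
      proof (rule maximum_modulus_frontier[of "\<lambda>l. inverse (\<Phi>(\<mu>,l))" "ball 0 r'"])
        show "(\<lambda>l. inverse (\<Phi>(\<mu>,l))) holomorphic_on interior (ball 0 r')"
          using nzb by (intro holomorphic_intros holomorphic_on_subset[OF hol]) auto
        show "continuous_on (closure (ball 0 r')) (\<lambda>l. inverse (\<Phi>(\<mu>,l)))"
          using nzb r'0 by (intro continuous_intros continuous_on_compose2[OF cont]) auto
        show "bounded (ball (0::complex) r')" by simp
        show "0 \<in> ball (0::complex) r'" using r'0 by simp
        fix l assume "l \<in> frontier (ball (0::complex) r')"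
        hence ls: "l \<in> sphere 0 r'" using r'0 by simp
        have "m \<le> norm (\<Phi>(0,l))" using l0m[OF ls] by (simp add: m_def)
        moreover have "norm (\<Phi>(\<mu>,l) - \<Phi>(0,l)) < m/2" using close ls by auto
        moreover have "norm (\<Phi>(0,l)) - norm (\<Phi>(\<mu>,l)) \<le> norm (\<Phi>(\<mu>,l) - \<Phi>(0,l))"
          using norm_triangle_ineq2[of "\<Phi>(0,l)" "\<Phi>(\<mu>,l)"] by (simp add: norm_minus_commute)
        ultimately have "norm (\<Phi>(\<mu>,l)) \<ge> m/2" by linarith
        moreover hence "norm (\<Phi>(\<mu>,l)) > 0" using m0 by linarith
        ultimately show "norm (inverse (\<Phi>(\<mu>,l))) \<le> 2/m" using m0
          by (simp add: norm_inverse norm_divide inverse_eq_divide divide_simps)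
      qed
      moreover have "norm (\<Phi>(\<mu>,0)) < m/2" using close[of 0] z0 r'0 by auto
      moreover have "\<Phi>(\<mu>,0) \<noteq> 0" using nzb[of 0] r'0 by auto
      ultimately show False using m0 by (simp add: norm_inverse norm_divide inverse_eq_divide divide_simps)
    qed
  qed
qed

lemma poly3_cont: "poly3 f \<Longrightarrow> continuous_on UNIV f"
proof (induction rule: poly3.induct)
  case (coord1) have "(\<lambda>(a::complex,b::complex,c::complex). a) = (\<lambda>p. fst p)" by auto
  thus ?case by (simp add: continuous_on_fst)
next
  case (coord2) have "(\<lambda>(a::complex,b::complex,c::complex). b) = (\<lambda>p. fst (snd p))" by auto
  thus ?case by (simp add: continuous_on_fst continuous_on_snd)
next
  case (coord3) have "(\<lambda>(a::complex,b::complex,c::complex). c) = (\<lambda>p. snd (snd p))" by auto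
  thus ?case by (simp add: continuous_on_snd)
qed (auto intro: continuous_intros)

lemma poly3_hol: "poly3 f \<Longrightarrow> (\<lambda>l. f (a1 + l*b1, a2 + l*b2, a3 + l*b3)) holomorphic_on UNIV"
  by (induction rule: poly3.induct) (auto intro!: holomorphic_intros)

lemma poly3_fst: "poly3 (\<lambda>p. fst p)"
proof - have "(\<lambda>(a::complex,b::complex,c::complex). a) = (\<lambda>p. fst p)" by auto
  thus ?thesis using poly3.coord1 by metis qed
lemma poly3_snd1: "poly3 (\<lambda>p. fst (snd p))"
proof - have "(\<lambda>(a::complex,b::complex,c::complex). b) = (\<lambda>p. fst (snd p))" by auto
  thus ?thesis using poly3.coord2 by metis qed
lemma poly3_snd2: "poly3 (\<lambda>p. snd (snd p))"
proof - have "(\<lambda>(a::complex,b::complex,c::complex). c) = (\<lambda>p. snd (snd p))" by auto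
  thus ?thesis using poly3.coord3 by metis qed

lemma poly3_diff: "poly3 f \<Longrightarrow> poly3 g \<Longrightarrow> poly3 (\<lambda>p. f p - g p)"
  using poly3.add[of f "\<lambda>p. (-1) * g p"] poly3.mult[OF poly3.const[of "-1"], of g] by simp

lemma poly3_neg: "poly3 g \<Longrightarrow> poly3 (\<lambda>p. - g p)"
  using poly3.mult[OF poly3.const[of "-1"], of g] by simp

lemma poly3_chebT_aux: "poly3 f \<Longrightarrow> poly3 (\<lambda>p. chebT k (f p)) \<and> poly3 (\<lambda>p. chebT (Suc k) (f p))"
proof (induction k)
  case 0 thus ?case using poly3.const[of 0] poly3.const[of 1] by simp
next
  case (Suc k)
  thus ?case by (auto intro!: poly3_diff poly3.mult)
qed

lemma poly3_chebS: "poly3 f \<Longrightarrow> poly3 (\<lambda>p. chebS j (f p))"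
  unfolding chebS_def using poly3_chebT_aux poly3_neg
  by (cases "j \<ge> -1") auto

lemma hol_chebT_aux: "(\<lambda>w. chebT k w) holomorphic_on UNIV \<and> (\<lambda>w. chebT (Suc k) w) holomorphic_on UNIV"
  by (induction k) (auto intro!: holomorphic_intros)

lemma hol_chebS: "(\<lambda>w. chebS j w) holomorphic_on UNIV"
  unfolding chebS_def using hol_chebT_aux
  by (cases "j \<ge> -1") (auto intro!: holomorphic_intros)

lemma chebT_2: "chebT k 2 = of_nat k"
proof -
  have "chebT k 2 = of_nat k \<and> chebT (Suc k) 2 = of_nat (Suc k)"
    by (induction k) (auto simp: algebra_simps)
  thus ?thesis by simp
qed

lemma chebS_2: "chebS j 2 = of_int (j + 1)"
  unfolding chebS_def chebT_2 by auto

lemma chebT_consec: "\<not> (chebT k w = 0 \<and> chebT (Suc k) w = 0)"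
proof (induction k)
  case (Suc k) thus ?case by auto
qed auto

lemma chebS_consec: "\<not> (chebS m w = 0 \<and> chebS (m-1) w = 0)"
proof (cases "m \<ge> 0")
  case True
  have n1: "nat (m+1) = Suc (nat m)" using True by (simp add: nat_add_distrib)
  have n2: "nat (m - 1 + 1) = nat m" by simp
  have e1: "chebS m w = chebT (Suc (nat m)) w" using True n1 by (simp add: chebS_def)
  have e2: "chebS (m-1) w = chebT (nat m) w" using True n2 unfolding chebS_def by simp
  show ?thesis using chebT_consec[of "nat m" w] e1 e2 by auto
next
  case False
  show ?thesis
  proof (cases "m = -1")
    case True thus ?thesis unfolding chebS_def by simp
  next
    case False2: False
    have lt: "m < -1" using False False2 by simp
    have n: "nat (- (m-1) - 1) = Suc (nat (-m-1))" using lt by arith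
    have e1: "chebS m w = - chebT (nat (-m-1)) w" using lt unfolding chebS_def by simp
    have e2: "chebS (m-1) w = - chebT (Suc (nat (-m-1))) w" using lt n unfolding chebS_def by simp
    show ?thesis using chebT_consec[of "nat (-m-1)" w] e1 e2 by auto
  qed
qed

lemma quad_root: fixes A B C :: complex assumes "A \<noteq> 0" shows "\<exists>x. A*x^2 + B*x + C = 0"
proof -
  define s where "s = csqrt (B^2 - 4*A*C)"
  have s2: "s^2 = B^2 - 4*A*C" by (simp add: s_def)
  define x where "x = (-B + s)/(2*A)"
  have "A*x^2 + B*x + C = (s^2 - B^2 + 4*A*C)/(4*A)"
    using assms by (simp add: x_def field_simps power2_eq_square)
  also have "\<dots> = 0" using s2 by simp
  finally show ?thesis by blast
qed

lemma dense_core: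
  fixes \<psi> f :: "pt3 \<Rightarrow> complex" and D :: "complex \<Rightarrow> complex"
  assumes p\<psi>: "poly3 \<psi>" and pf: "poly3 f"
  and z: "\<psi> (x0,y0,z0) = 0" and nz: "\<psi> (x0+l1*e1, y0+l1*e2, z0) \<noteq> 0"
  and hD: "D holomorphic_on UNIV" and D0: "D z0 = 0" and D1: "D z1 \<noteq> 0"
  and van: "\<And>p. \<psi> p = 0 \<Longrightarrow> D (snd (snd p)) \<noteq> 0 \<Longrightarrow> f p = 0"
  shows "f (x0,y0,z0) = 0"
proof (rule ccontr)
  assume fne: "f (x0,y0,z0) \<noteq> 0"
  define g2 where "g2 = (\<lambda>q::complex\<times>complex. f (x0 + snd q * e1, y0 + snd q * e2, z0 + fst q))"
  have cg: "continuous_on UNIV g2" unfolding g2_def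
    by (intro continuous_on_compose2[OF poly3_cont[OF pf]] continuous_intros) auto
  have "isCont g2 (0,0)" using cg by (simp add: continuous_on_eq_continuous_at)
  moreover have "g2 (0,0) \<noteq> 0" using fne by (simp add: g2_def)
  ultimately obtain \<eta> where \<eta>0: "\<eta> > 0" and \<eta>': "\<And>q. dist q (0,0) < \<eta> \<Longrightarrow> dist (g2 q) (g2 (0,0)) < norm (g2 (0,0))"
    unfolding continuous_at_eps_delta by (meson zero_less_norm_iff)
  have \<eta>: "g2 q \<noteq> 0" if "dist q (0,0) < \<eta>" for q
    using \<eta>'[OF that] by (auto simp: dist_norm)
  define \<Phi> where "\<Phi> = (\<lambda>q::complex\<times>complex. \<psi> (x0 + snd q * e1, y0 + snd q * e2, z0 + fst q))"
  have c\<Phi>: "continuous_on UNIV \<Phi>" unfolding \<Phi>_def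
    by (intro continuous_on_compose2[OF poly3_cont[OF p\<psi>]] continuous_intros) auto
  have h\<Phi>: "(\<lambda>l. \<Phi>(\<mu>,l)) holomorphic_on UNIV" for \<mu>
    using poly3_hol[OF p\<psi>, of x0 e1 y0 e2 "z0+\<mu>" 0] unfolding \<Phi>_def by (simp add: mult.commute)
  obtain \<delta> where \<delta>0: "\<delta> > 0" and \<delta>: "\<And>\<mu>. norm \<mu> < \<delta> \<Longrightarrow> \<exists>l. norm l < \<eta>/2 \<and> \<Phi>(\<mu>,l) = 0"
    using root_cont[OF c\<Phi> h\<Phi>, of l1 "\<eta>/2"] z nz \<eta>0 unfolding \<Phi>_def by auto
  obtain r where r0: "0 < r" and rz: "\<And>w. w \<in> ball z0 r - {z0} \<Longrightarrow> D w \<noteq> 0"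
    using isolated_zeros[OF hD, of z0 z1] D0 D1 by auto
  define \<mu> :: complex where "\<mu> = of_real (min (min \<delta> (\<eta>/2)) r / 2)"
  have n\<mu>: "norm \<mu> = min (min \<delta> (\<eta>/2)) r / 2" using \<delta>0 \<eta>0 r0 by (simp add: \<mu>_def)
  have "norm \<mu> < \<delta>" "norm \<mu> < \<eta>/2" "norm \<mu> < r" "\<mu> \<noteq> 0" using n\<mu> \<delta>0 \<eta>0 r0 by auto
  then obtain l where l: "norm l < \<eta>/2" and \<Phi>0: "\<Phi>(\<mu>,l) = 0" using \<delta> by blast
  have "D (z0 + \<mu>) \<noteq> 0" using rz[of "z0+\<mu>"] \<open>norm \<mu> < r\<close> \<open>\<mu> \<noteq> 0\<close> by (auto simp: dist_norm)
  hence "f (x0 + l * e1, y0 + l * e2, z0 + \<mu>) = 0" using van \<Phi>0 unfolding \<Phi>_def by auto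
  moreover have "dist (\<mu>,l) (0,0) < \<eta>"
  proof -
    have "dist (\<mu>,l) (0,0) = sqrt ((norm \<mu>)^2 + (norm l)^2)" by (simp add: dist_Pair_Pair)
    also have "\<dots> \<le> norm \<mu> + norm l" using sqrt_add_le_add_sqrt[of "(norm \<mu>)^2" "(norm l)^2"] by simp 
    also have "\<dots> < \<eta>" using l \<open>norm \<mu> < \<eta>/2\<close> by linarith
    finally show ?thesis .
  qed
  ultimately show False using \<eta> unfolding g2_def by auto
qed

definition Dz :: "int \<Rightarrow> complex \<Rightarrow> complex" where
  "Dz m z = (chebS m z)^2 - (chebS (m-1) z)^2"

lemma hol_Dz: "Dz m holomorphic_on UNIV"
proof -
  have "(\<lambda>z. (chebS m z)^2 - (chebS (m-1) z)^2) holomorphic_on UNIV"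
    using hol_chebS by (auto intro!: holomorphic_intros)
  thus ?thesis unfolding Dz_def by (simp add: fun_eq_iff)
qed

lemma Dz_2: "Dz m 2 \<noteq> 0"
proof -
  have "Dz m 2 = of_int (2*m+1)" unfolding Dz_def chebS_2 by (simp add: algebra_simps power2_eq_square)
  moreover have "2*m+1 \<noteq> 0" by presburger
  ultimately show ?thesis by (simp only: of_int_eq_0_iff not_False_eq_True)
qed

lemma Dz_zero: assumes "Dz m z = 0"
  shows "chebS m z \<noteq> 0 \<and> (chebS m z = chebS (m-1) z \<or> chebS m z = - chebS (m-1) z)"
proof -
  have "(chebS m z - chebS (m-1) z) * (chebS m z + chebS (m-1) z) = 0"
    using assms unfolding Dz_def by (simp add: algebra_simps power2_eq_square)
  hence "chebS m z - chebS (m-1) z = 0 \<or> chebS m z + chebS (m-1) z = 0" by simp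
  hence e: "chebS m z = chebS (m-1) z \<or> chebS m z = - chebS (m-1) z"
    by (metis eq_neg_iff_add_eq_0 right_minus_eq)
  thus ?thesis using chebS_consec[of m z] by auto
qed

lemma poly3_Dz: "poly3 (\<lambda>p. Dz m (snd (snd p)))"
  unfolding Dz_def power2_eq_square
  by (intro poly3_diff poly3.mult poly3_chebS poly3_snd2)

definition \<psi>V :: "int \<Rightarrow> int \<Rightarrow> pt3 \<Rightarrow> complex" where
  "\<psi>V m n p = chebS n (tV m p) * chebS (m-1) (snd (snd p)) - chebS (n-1) (tV m p) * chebS m (snd (snd p))"
definition \<psi>U :: "int \<Rightarrow> int \<Rightarrow> pt3 \<Rightarrow> complex" where
  "\<psi>U m n p = chebS n (tU m p) * chebS (m-1) (snd (snd p)) - chebS (n-1) (tU m p) * chebS m (snd (snd p))"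

lemma Vkl_eq: "Vkl m n = {p. \<psi>V m n p = 0}"
  by (auto simp: Vkl_def \<psi>V_def)
lemma Ukl_eq: "Ukl m n = {p. \<psi>U m n p = 0}"
  by (auto simp: Ukl_def \<psi>U_def)

lemma tV_alt: "tV m = (\<lambda>p. (fst p * chebS m (snd (snd p)) - fst (snd p) * chebS (m-1) (snd (snd p))) *
   (fst (snd p) * chebS m (snd (snd p)) - fst p * chebS (m-1) (snd (snd p)))
   - snd (snd p) * ((chebS m (snd (snd p))) * (chebS m (snd (snd p))) + (chebS (m-1) (snd (snd p))) * (chebS (m-1) (snd (snd p))))
   + 4 * chebS m (snd (snd p)) * chebS (m-1) (snd (snd p)))"
  by (auto simp: tV_def fun_eq_iff power2_eq_square)
lemma tU_alt: "tU m = (\<lambda>p. fst p * fst (snd p)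
   - snd (snd p) * ((chebS m (snd (snd p))) * (chebS m (snd (snd p))) + (chebS (m-1) (snd (snd p))) * (chebS (m-1) (snd (snd p))))
   + 4 * chebS m (snd (snd p)) * chebS (m-1) (snd (snd p)))"
  by (auto simp: tU_def fun_eq_iff power2_eq_square)

lemma poly3_tV: "poly3 (tV m)"
  unfolding tV_alt
  by (intro poly3_diff poly3.mult poly3.add poly3_chebS poly3_snd2 poly3_fst poly3_snd1 poly3.const)
lemma poly3_tU: "poly3 (tU m)"
  unfolding tU_alt
  by (intro poly3_diff poly3.mult poly3.add poly3_chebS poly3_snd2 poly3_fst poly3_snd1 poly3.const)

lemma poly3_\<psi>V: "poly3 (\<psi>V m n)"
proof -
  have "poly3 (\<lambda>p. chebS n (tV m p) * chebS (m-1) (snd (snd p)) - chebS (n-1) (tV m p) * chebS m (snd (snd p)))"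
    by (intro poly3_diff poly3.mult poly3_chebS poly3_snd2 poly3_tV)
  thus ?thesis unfolding \<psi>V_def by (simp add: fun_eq_iff)
qed
lemma poly3_\<psi>U: "poly3 (\<psi>U m n)"
proof -
  have "poly3 (\<lambda>p. chebS n (tU m p) * chebS (m-1) (snd (snd p)) - chebS (n-1) (tU m p) * chebS m (snd (snd p)))"
    by (intro poly3_diff poly3.mult poly3_chebS poly3_snd2 poly3_tU)
  thus ?thesis unfolding \<psi>U_def by (simp add: fun_eq_iff)
qed

lemma H_at_2: assumes "Dz m z0 = 0"
  shows "chebS n 2 * chebS (m-1) z0 - chebS (n-1) 2 * chebS m z0 \<noteq> 0"
proof -
  let ?a = "chebS m z0" and ?b = "chebS (m-1) z0"
  have a: "?a \<noteq> 0" and e: "?a = ?b \<or> ?a = - ?b" using Dz_zero[OF assms] by auto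
  have "2*n+1 \<noteq> 0" by presburger
  hence n2: "(of_int (2*n+1)::complex) \<noteq> 0" by (simp only: of_int_eq_0_iff not_False_eq_True)
  show ?thesis
  proof (cases "?a = ?b")
    case True thus ?thesis using a unfolding chebS_2 by (simp add: algebra_simps)
  next
    case False
    hence b: "?b = - ?a" using e by auto
    have "chebS n 2 * ?b - chebS (n-1) 2 * ?a = - (of_int (2*n+1) * ?a)"
      unfolding chebS_2 b by (simp add: algebra_simps)
    thus ?thesis using a n2 by simp
  qed
qed

lemma dense_V: "zariski_dense_in (Vkl m n) {p \<in> Vkl m n. Dz m (snd (snd p)) \<noteq> 0}"
  unfolding zariski_dense_in_def
proof (intro conjI allI impI ballI)
  fix f p assume pf: "poly3 f" and van: "\<forall>p\<in>{p \<in> Vkl m n. Dz m (snd (snd p)) \<noteq> 0}. f p = 0"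
    and pV: "p \<in> Vkl m n"
  obtain x0 y0 z0 where p: "p = (x0,y0,z0)" by (metis prod_cases3)
  show "f p = 0"
  proof (cases "Dz m z0 = 0")
    case False thus ?thesis using van pV p by auto
  next
    case True
    let ?a = "chebS m z0" and ?b = "chebS (m-1) z0"
    have a: "?a \<noteq> 0" and e: "?a = ?b \<or> ?a = - ?b" using Dz_zero[OF True] by auto
    have b: "?b \<noteq> 0" using a e by auto
    define c0 where "c0 = z0 * (?a^2 + ?b^2) - 4 * ?a * ?b"
    obtain l where l: "(- ?a * ?b) * l^2 + (?a * (y0 * ?a - x0 * ?b) - ?b * (x0 * ?a - y0 * ?b)) * l
        + ((x0 * ?a - y0 * ?b) * (y0 * ?a - x0 * ?b) - c0 - 2) = 0"
      using quad_root[of "- ?a * ?b"] a b by auto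
    have t2: "tV m (x0 + l * 1, y0 + l * 0, z0) = 2"
    proof -
      have "tV m (x0 + l * 1, y0 + l * 0, z0) - 2 = (- ?a * ?b) * l^2 + (?a * (y0 * ?a - x0 * ?b) - ?b * (x0 * ?a - y0 * ?b)) * l
        + ((x0 * ?a - y0 * ?b) * (y0 * ?a - x0 * ?b) - c0 - 2)"
        unfolding tV_def c0_def by (simp add: algebra_simps power2_eq_square)
      from trans[OF this l] show ?thesis by simp
    qed
    have nz: "\<psi>V m n (x0 + l * 1, y0 + l * 0, z0) \<noteq> 0"
      using H_at_2[OF True, of n] unfolding \<psi>V_def by (simp only: t2 snd_conv not_False_eq_True)
    show ?thesis unfolding p
    proof (rule dense_core[OF poly3_\<psi>V pf _ nz hol_Dz True Dz_2])
      show "\<psi>V m n (x0, y0, z0) = 0" using pV p Vkl_eq by auto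
      fix q assume "\<psi>V m n q = 0" "Dz m (snd (snd q)) \<noteq> 0"
      thus "f q = 0" using van Vkl_eq by (cases q) auto
    qed
  qed
qed auto

lemma dense_U: "zariski_dense_in (Ukl m n) {p \<in> Ukl m n. Dz m (snd (snd p)) \<noteq> 0}"
  unfolding zariski_dense_in_def
proof (intro conjI allI impI ballI)
  fix f p assume pf: "poly3 f" and van: "\<forall>p\<in>{p \<in> Ukl m n. Dz m (snd (snd p)) \<noteq> 0}. f p = 0"
    and pV: "p \<in> Ukl m n"
  obtain x0 y0 z0 where p: "p = (x0,y0,z0)" by (metis prod_cases3)
  show "f p = 0"
  proof (cases "Dz m z0 = 0")
    case False thus ?thesis using van pV p by auto
  next
    case True
    let ?a = "chebS m z0" and ?b = "chebS (m-1) z0"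
    define c0 where "c0 = z0 * (?a^2 + ?b^2) - 4 * ?a * ?b"
    obtain l where l: "1 * l^2 + (x0 + y0) * l + (x0 * y0 - c0 - 2) = 0"
      using quad_root[of 1] by auto
    have t2: "tU m (x0 + l * 1, y0 + l * 1, z0) = 2"
    proof -
      have "tU m (x0 + l * 1, y0 + l * 1, z0) - 2 = 1 * l^2 + (x0 + y0) * l + (x0 * y0 - c0 - 2)"
        unfolding tU_def c0_def by (simp add: algebra_simps power2_eq_square)
      from trans[OF this l] show ?thesis by simp
    qed
    have nz: "\<psi>U m n (x0 + l * 1, y0 + l * 1, z0) \<noteq> 0"
      using H_at_2[OF True, of n] unfolding \<psi>U_def by (simp only: t2 snd_conv not_False_eq_True)
    show ?thesis unfolding p
    proof (rule dense_core[OF poly3_\<psi>U pf _ nz hol_Dz True Dz_2])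
      show "\<psi>U m n (x0, y0, z0) = 0" using pV p Ukl_eq by auto
      fix q assume "\<psi>U m n q = 0" "Dz m (snd (snd q)) \<noteq> 0"
      thus "f q = 0" using van Ukl_eq by (cases q) auto
    qed
  qed
qed auto

lemma open_D: "zariski_open_in X {p \<in> X. Dz m (snd (snd p)) \<noteq> 0}"
  unfolding zariski_open_in_def
  by (rule exI[of _ "{\<lambda>p. Dz m (snd (snd p))}"]) (auto simp: poly3_Dz)

lemma lin_inv:
  fixes a b d u v :: complex
  assumes dd: "d = a*a - b*b" and d0: "d \<noteq> 0"
  shows "((a*u + b * v)/d) * a - ((b*u + a * v)/d) * b = u \<and> ((b*u + a * v)/d) * a - ((a*u + b * v)/d) * b = v"
proof
  have "((a*u + b * v)/d) * a - ((b*u + a * v)/d) * b = ((a*u + b * v) * a - (b*u + a * v) * b) / d"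
    by (simp only: diff_divide_distrib times_divide_eq_left)
  also have "(a*u + b * v) * a - (b*u + a * v) * b = u * d"
    unfolding dd by (simp add: algebra_simps)
  also have "u * d / d = u" using d0 by simp
  finally show "((a*u + b * v)/d) * a - ((b*u + a * v)/d) * b = u" .
  have "((b*u + a * v)/d) * a - ((a*u + b * v)/d) * b = ((b*u + a * v) * a - (a*u + b * v) * b) / d"
    by (simp only: diff_divide_distrib times_divide_eq_left)
  also have "(b*u + a * v) * a - (a*u + b * v) * b = v * d"
    unfolding dd by (simp add: algebra_simps)
  also have "v * d / d = v" using d0 by simp
  finally show "((b*u + a * v)/d) * a - ((a*u + b * v)/d) * b = v" .
qed

theorem proposition4p4:
  fixes m n :: int
  shows "birational (Vkl m n) (Ukl m n)"
proof -
  define a where "a = chebS m"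
  define b where "b = chebS (m-1)"
  define F where "F = (\<lambda>(x::complex,y::complex,z::complex). (x * a z - y * b z, y * a z - x * b z, z))"
  define G where "G = (\<lambda>(u::complex,v::complex,z::complex). ((a z * u + b z * v) / Dz m z, (b z * u + a z * v) / Dz m z, z))"
  define X0 where "X0 = {p \<in> Vkl m n. Dz m (snd (snd p)) \<noteq> 0}"
  define Y0 where "Y0 = {p \<in> Ukl m n. Dz m (snd (snd p)) \<noteq> 0}"
  have Dab: "Dz m z = a z * a z - b z * b z" for z by (simp add: Dz_def a_def b_def power2_eq_square)
  have tVF: "tV m (x,y,z) = tU m (F (x,y,z))" for x y z
    by (simp add: tV_def tU_def F_def a_def b_def)
  have GF: "G (F (x,y,z)) = (x,y,z)" if "Dz m z \<noteq> 0" for x y z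
    using that unfolding Dab by (simp add: F_def G_def Dab field_simps)
  have FG: "F (G (u,v,z)) = (u,v,z)" if "Dz m z \<noteq> 0" for u v z
    using that lin_inv[OF Dab that] by (simp add: F_def G_def)
  have pa: "poly3 (\<lambda>p. a (snd (snd p)))" "poly3 (\<lambda>p. b (snd (snd p)))"
    unfolding a_def b_def by (auto intro: poly3_chebS poly3_snd2)
  have pF1: "poly3 (\<lambda>p. fst p * a (snd (snd p)) - fst (snd p) * b (snd (snd p)))"
    by (intro poly3_diff poly3.mult poly3_fst poly3_snd1 pa)
  have pF2: "poly3 (\<lambda>p. fst (snd p) * a (snd (snd p)) - fst p * b (snd (snd p)))"
    by (intro poly3_diff poly3.mult poly3_fst poly3_snd1 pa)
  have pG1: "poly3 (\<lambda>p. a (snd (snd p)) * fst p + b (snd (snd p)) * fst (snd p))"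
    by (intro poly3.add poly3.mult poly3_fst poly3_snd1 pa)
  have pG2: "poly3 (\<lambda>p. b (snd (snd p)) * fst p + a (snd (snd p)) * fst (snd p))"
    by (intro poly3.add poly3.mult poly3_fst poly3_snd1 pa)
  have p1: "poly3 (\<lambda>_. 1)" by (rule poly3.const)
  have ratF: "rational_map_on X0 F"
    unfolding rational_map_on_def
    apply (rule exI[of _ "\<lambda>p. fst p * a (snd (snd p)) - fst (snd p) * b (snd (snd p))"])
    apply (rule exI[of _ "\<lambda>_. 1"])
    apply (rule exI[of _ "\<lambda>p. fst (snd p) * a (snd (snd p)) - fst p * b (snd (snd p))"])
    apply (rule exI[of _ "\<lambda>_. 1"])
    apply (rule exI[of _ "\<lambda>p. snd (snd p)"])
    apply (rule exI[of _ "\<lambda>_. 1"])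
    using pF1 pF2 p1 poly3_snd2 by (simp add: F_def split_beta)
  have ratG: "rational_map_on Y0 G"
    unfolding rational_map_on_def
    apply (rule exI[of _ "\<lambda>p. a (snd (snd p)) * fst p + b (snd (snd p)) * fst (snd p)"])
    apply (rule exI[of _ "\<lambda>p. Dz m (snd (snd p))"])
    apply (rule exI[of _ "\<lambda>p. b (snd (snd p)) * fst p + a (snd (snd p)) * fst (snd p)"])
    apply (rule exI[of _ "\<lambda>p. Dz m (snd (snd p))"])
    apply (rule exI[of _ "\<lambda>p. snd (snd p)"])
    apply (rule exI[of _ "\<lambda>_. 1"])
    using pG1 pG2 p1 poly3_snd2 poly3_Dz by (simp add: G_def Y0_def split_beta)
  have psiF: "\<psi>U m n (F (x,y,z)) = \<psi>V m n (x,y,z)" for x y z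
    unfolding \<psi>U_def \<psi>V_def tVF by (simp add: F_def)
  have FX: "F ` X0 \<subseteq> Y0"
  proof
    fix q assume "q \<in> F ` X0"
    then obtain x y z where xy: "(x,y,z) \<in> X0" and q: "q = F (x,y,z)" by auto
    have "snd (snd q) = z" by (simp add: q F_def)
    moreover have "\<psi>U m n q = 0" using xy psiF[of x y z] by (simp add: q X0_def Vkl_eq)
    ultimately show "q \<in> Y0" using xy by (simp add: X0_def Y0_def Ukl_eq)
  qed
  have GY: "G ` Y0 \<subseteq> X0"
  proof
    fix q assume "q \<in> G ` Y0"
    then obtain u v z where xy: "(u,v,z) \<in> Y0" and q: "q = G (u,v,z)" by auto
    have Dn: "Dz m z \<noteq> 0" using xy by (simp add: Y0_def)
    obtain x y where g: "G (u,v,z) = (x,y,z)" by (simp add: G_def)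
    have "F (x,y,z) = (u,v,z)" using FG[OF Dn, of u v] g by simp
    hence "\<psi>V m n (x,y,z) = \<psi>U m n (u,v,z)" using psiF[of x y z] by simp
    thus "q \<in> X0" using xy Dn unfolding q g by (simp add: X0_def Y0_def Vkl_eq Ukl_eq)
  qed
  have GFX: "\<forall>x\<in>X0. G (F x) = x" using GF by (auto simp: X0_def)
  have FGY: "\<forall>y\<in>Y0. F (G y) = y" using FG by (auto simp: Y0_def)
  have o1: "zariski_open_in (Vkl m n) X0" unfolding X0_def by (rule open_D)
  have o2: "zariski_open_in (Ukl m n) Y0" unfolding Y0_def by (rule open_D)
  have d1: "zariski_dense_in (Vkl m n) X0" unfolding X0_def by (rule dense_V)
  have d2: "zariski_dense_in (Ukl m n) Y0" unfolding Y0_def by (rule dense_U)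
  show ?thesis unfolding birational_def
    apply (rule exI[of _ X0], rule exI[of _ Y0], rule exI[of _ F], rule exI[of _ G])
    apply (intro conjI)
    apply (fact o1)
    apply (fact d1)
    apply (fact o2)
    apply (fact d2)
    apply (fact ratF)
    apply (fact ratG)
    apply (fact FX)
    apply (fact GY)
    apply (fact GFX)
    apply (fact FGY)
    done
qed

end
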